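(* Fix a baseline $\mathbf{x}'\in\mathbb{R}^d$. Consider the Baseline Shapley (Bshap) value function $v^B_{\mathbf{x},f,p}(S)=f(\mathbf{x}_S;\mathbf{x}'_{\bar S})$ and the Conditional Expectation (CES) value function $v^C_{\mathbf{x},f,p}(S)=\mathbb{E}_{\mathbf{x}''_{\bar S}\sim p(\mathbf{x}''_{\bar S}\mid \mathbf{x}_S)}[f(\mathbf{x}_S;\mathbf{x}''_{\bar S})]$. For no finite $T$ is Bshap strong $T$-robust to off-manifold perturbations, and for no finite $T$ is CES strong $T$-robust to off-manifold perturbations.
   Context: Here $f:\mathbb{R}^d\to\mathbb{R}$ is a model, $p$ is a probability density on $\mathbb{R}^d$, $\mathbf{x}\in\mathbb{R}^d$ is the explicand, $S\subseteq[d]$, $\bar S=[d]\setminus S$, and $(\mathbf{x}_S;\mathbf{z}_{\bar S})$ denotes the vector whose coordinates in $S$ are those of $\mathbf{x}$ and whose coordinates in $\bar S$ are those of $\mathbf{z}$. A value function $v_{\mathbf{x},f,p}(S)$ is called strong $T$-robust to off-manifold perturbations if for any two models $f_1,f_2$ and any probability measure $p$, the condition $\max_{\mathbf{z}}|f_1(\mathbf{z})-f_2(\mathbf{z})|\,p(\mathbf{z})\le\epsilon$ always entails $|v_{\mathbf{x},f_1,p}(S)-v_{\mathbf{x},f_2,p}(S)|\le T\epsilon$ for every $\mathbf{x}$ and every $S$. *)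

theory Defs
  imports "HOL-Analysis.Analysis"
begin

text \<open>Points of R^d are vectors real^'n for an arbitrary finite index type 'n (so d = CARD('n) \<ge> 1);
  subsets S of [d] are sets of type 'n set.\<close>

definition mrg :: "'n set \<Rightarrow> real^'n \<Rightarrow> real^'n \<Rightarrow> real^'n" where
  "mrg S x z = (\<chi> i. if i \<in> S then x $ i else z $ i)"

text \<open>(x_S; z_Sbar) where z only supplies the coordinates outside S.\<close>
definition mrgf :: "'n set \<Rightarrow> real^'n \<Rightarrow> ('n \<Rightarrow> real) \<Rightarrow> real^'n" where
  "mrgf S x z = (\<chi> i. if i \<in> S then x $ i else z i)"

definition prob_density :: "(real^'n \<Rightarrow> real) \<Rightarrow> bool" where
  "prob_density p \<longleftrightarrow> p \<in> borel_measurable lborel \<and> (\<forall>z. 0 \<le> p z)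
     \<and> (\<integral>\<^sup>+ z. ennreal (p z) \<partial>lborel) = 1"

text \<open>Value functions take arguments: explicand x, model f, density p, coalition S.\<close>
type_synonym ('n) value_fun =
  "real^'n \<Rightarrow> (real^'n \<Rightarrow> real) \<Rightarrow> (real^'n \<Rightarrow> real) \<Rightarrow> 'n set \<Rightarrow> real"

definition strong_robust :: "('n::finite) value_fun \<Rightarrow> real \<Rightarrow> bool" where
  "strong_robust v T \<longleftrightarrow>
     (\<forall>f1 f2 p \<epsilon>. prob_density p \<longrightarrow> (\<forall>z. \<bar>f1 z - f2 z\<bar> * p z \<le> \<epsilon>) \<longrightarrow>
        (\<forall>x S. \<bar>v x f1 p S - v x f2 p S\<bar> \<le> T * \<epsilon>))"

definition bshap :: "real^('n::finite) \<Rightarrow> 'n value_fun" where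
  "bshap x' x f p S = f (mrg S x x')"

text \<open>Conditional expectation value function: the conditional density of x''_Sbar given x_S is
  p(x_S; z) / \<integral> p(x_S; z) dz, integrating over the coordinates outside S (Lebesgue measure on R^Sbar).\<close>
definition ces :: "('n::finite) value_fun" where
  "ces x f p S =
     (\<integral> z. f (mrgf S x z) * p (mrgf S x z) \<partial>(\<Pi>\<^sub>M i\<in>-S. lborel))
     / (\<integral> z. p (mrgf S x z) \<partial>(\<Pi>\<^sub>M i\<in>-S. lborel))"

end

theory Submission
  imports Defs
begin

lemma box_density:
  fixes c :: real
  assumes c: "c \<ge> 1"
  shows "prob_density (\<lambda>z::real^'n. indicator (cbox 0 (\<chi> i. c)) z / c ^ CARD('n))"
proof -
  have cp: "c ^ CARD('n) > 0" using c by simp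
  have "(\<integral>\<^sup>+ (z::real^'n). ennreal (indicator (cbox 0 (\<chi> i. c)) z / c ^ CARD('n)) \<partial>lborel)
      = (\<integral>\<^sup>+ z. ennreal (1 / c ^ CARD('n)) * indicator (cbox (0::real^'n) (\<chi> i. c)) z \<partial>lborel)"
    by (rule nn_integral_cong) (auto simp: indicator_def)
  also have "\<dots> = ennreal (1 / c ^ CARD('n)) * emeasure lborel (cbox (0::real^'n) (\<chi> i. c))"
    by (simp add: nn_integral_cmult_indicator)
  also have "emeasure lborel (cbox (0::real^'n) (\<chi> i. c)) = ennreal (c ^ CARD('n))"
  proof -
    have "(0::real^'n) \<in> cbox 0 (\<chi> i. c)" using c by (simp add: mem_box_cart)
    then have ne: "cbox (0::real^'n) (\<chi> i. c) \<noteq> {}" by blast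
    have "emeasure lborel (cbox (0::real^'n) (\<chi> i. c)) = ennreal (measure lborel (cbox (0::real^'n) (\<chi> i. c)))"
      using emeasure_lborel_cbox_finite[of "0::real^'n" "\<chi> i. c"] by (intro emeasure_eq_ennreal_measure) simp
    also have "measure lborel (cbox (0::real^'n) (\<chi> i. c)) = c ^ CARD('n)"
      using ne by (simp add: content_cbox_cart)
    finally show ?thesis .
  qed
  also have "ennreal (1 / c ^ CARD('n)) * ennreal (c ^ CARD('n)) = 1"
    using cp c by (simp flip: ennreal_mult)
  finally show ?thesis
    unfolding prob_density_def using c by (auto simp: indicator_def)
qed

theorem proposition2:
  fixes x' :: "real^'n"
  shows "(\<forall>T::real. \<not> strong_robust (bshap x') T) \<and> (\<forall>T::real. \<not> strong_robust (ces :: 'n value_fun) T)"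
proof -
  have key: "\<exists>p f1 f2. prob_density p \<and> (\<forall>z::real^'n. \<bar>f1 z - f2 z\<bar> * p z \<le> 1)
      \<and> (\<forall>z. f1 z = 0) \<and> (\<forall>z. f2 z = c ^ CARD('n)) \<and> p 0 > 0" if c: "c \<ge> 1" for c :: real
  proof (intro exI conjI)
    show "prob_density (\<lambda>z::real^'n. indicator (cbox 0 (\<chi> i. c)) z / c ^ CARD('n))"
      using box_density c by blast
    have cp: "c ^ CARD('n) > 0" using c by simp
    show "\<forall>z::real^'n. \<bar>(\<lambda>_. 0) z - (\<lambda>_. c ^ CARD('n)) z\<bar> * (indicator (cbox 0 (\<chi> i. c)) z / c ^ CARD('n)) \<le> 1"
      using cp by (auto simp: indicator_def)
    show "(0::real) < indicator (cbox 0 (\<chi> i. c)) (0::real^'n) / c ^ CARD('n)"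
      using c cp by (auto simp: indicator_def mem_box_cart)
  qed auto
  have big: "c ^ CARD('n) \<ge> c" if "c \<ge> 1" for c :: real
  proof -
    have "c ^ 1 \<le> c ^ CARD('n)" using that
      by (intro power_increasing) (auto simp: Suc_leI)
    then show ?thesis by simp
  qed
  show ?thesis
  proof (intro conjI allI notI)
    fix T :: real assume R: "strong_robust (bshap x') T"
    define c where "c = \<bar>T\<bar> + 2"
    have c1: "c \<ge> 1" unfolding c_def by simp
    obtain p f1 f2 where P: "prob_density p" "\<forall>z::real^'n. \<bar>f1 z - f2 z\<bar> * p z \<le> 1"
      "\<forall>z. f1 z = 0" "\<forall>z. f2 z = c ^ CARD('n)" using key[OF c1] by blast
    have "\<bar>bshap x' x' f1 p {} - bshap x' x' f2 p {}\<bar> \<le> T * 1"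
      using R P unfolding strong_robust_def by blast
    then have "c ^ CARD('n) \<le> T" using P(3,4) c1 by (simp add: bshap_def)
    then show False using big[OF c1] unfolding c_def by linarith
  next
    fix T :: real assume R: "strong_robust (ces :: 'n value_fun) T"
    define c where "c = \<bar>T\<bar> + 2"
    have c1: "c \<ge> 1" unfolding c_def by simp
    obtain p f1 f2 where P: "prob_density p" "\<forall>z::real^'n. \<bar>f1 z - f2 z\<bar> * p z \<le> 1"
      "\<forall>z. f1 z = 0" "\<forall>z. f2 z = c ^ CARD('n)" "p 0 > 0" using key[OF c1] by blast
    have R1: "\<bar>ces 0 f1 p UNIV - ces 0 f2 p UNIV\<bar> \<le> T * 1"
      using R P unfolding strong_robust_def by blast
    have m: "mrgf UNIV 0 z = (0::real^'n)" for z by (simp add: mrgf_def vec_eq_iff)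
    have ev: "ces 0 f p UNIV = f 0 * p 0 / p 0" for f :: "real^'n \<Rightarrow> real"
      unfolding ces_def m by (simp add: PiM_empty)
    have "c ^ CARD('n) \<le> T" using R1 P(3,4,5) c1 by (simp add: ev)
    then show False using big[OF c1] unfolding c_def by linarith
  qed
qed

end
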